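(* Let $C>0$, $\mathbf{w}^t\in\mathbb{R}^d$, let $\theta_1^t\le\dots\le\theta_{K-1}^t$ be real thresholds, $\mathbf{x}^t\in\mathbb{R}^d$ and integers $1\le y_l^t\le y_r^t\le K$; let $I_t=\{1,\dots,y_l^t-1\}\cup\{y_r^t,\dots,K-1\}$. Let $(\mathbf{w}^{t+1},\boldsymbol\theta^{t+1})$ be the PA-I update, i.e. the $(\mathbf{w},\boldsymbol\theta)$-part of the minimizer over $\mathbf{w}\in\mathbb{R}^d$, $\boldsymbol\theta\in\mathbb{R}^{K-1}$, $(\xi_i)_{i\in I_t}$ of $$\tfrac12\Vert\mathbf{w}-\mathbf{w}^t\Vert^2+\tfrac12\Vert\boldsymbol\theta-\boldsymbol\theta^t\Vert^2+C\sum_{i\in I_t}\xi_i$$ subject to $\mathbf{w}\cdot\mathbf{x}^t-\theta_i\ge 1-\xi_i$ for $i=1,\dots,y_l^t-1$, $\mathbf{w}\cdot\mathbf{x}^t-\theta_i\le -1+\xi_i$ for $i=y_r^t,\dots,K-1$, and $\xi_i\ge 0$ for $i\in I_t$. Then $\theta_1^{t+1}\le\theta_2^{t+1}\le\dots\le\theta_{K-1}^{t+1}$.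
   Context: Online ranking into $K$ ordered classes with interval labels $[y_l^t,y_r^t]$: a ranker is $(\mathbf{w},\boldsymbol\theta)$, $\boldsymbol\theta=(\theta_1,\dots,\theta_{K-1})$, predicting $\min\{i:\mathbf{w}\cdot\mathbf{x}-\theta_i<0\}$ with $\theta_K=\infty$. PA-I is the passive-aggressive variant with aggressiveness parameter $C$ that at each trial computes the exact solution of the stated convex program. *)

theory Defs
  imports "HOL-Analysis.Analysis"
begin

definition PA_I_idx :: "nat \<Rightarrow> nat \<Rightarrow> nat \<Rightarrow> nat set" where
  "PA_I_idx K yl yr = {1..yl - 1} \<union> {yr..K - 1}"

definition PA_feasible ::
  "nat \<Rightarrow> real^'d \<Rightarrow> nat \<Rightarrow> nat \<Rightarrow> real^'d \<Rightarrow> (nat \<Rightarrow> real) \<Rightarrow> (nat \<Rightarrow> real) \<Rightarrow> bool" where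
  "PA_feasible K x yl yr w \<theta> \<xi> \<longleftrightarrow>
     (\<forall>i\<in>{1..yl - 1}. w \<bullet> x - \<theta> i \<ge> 1 - \<xi> i) \<and>
     (\<forall>i\<in>{yr..K - 1}. w \<bullet> x - \<theta> i \<le> -1 + \<xi> i) \<and>
     (\<forall>i\<in>PA_I_idx K yl yr. \<xi> i \<ge> 0)"

definition PA_objective ::
  "real \<Rightarrow> nat \<Rightarrow> nat \<Rightarrow> nat \<Rightarrow> real^'d \<Rightarrow> (nat \<Rightarrow> real) \<Rightarrow> real^'d \<Rightarrow> (nat \<Rightarrow> real) \<Rightarrow> (nat \<Rightarrow> real) \<Rightarrow> real" where
  "PA_objective C K yl yr wt \<theta>t w \<theta> \<xi> =
     (1/2) * (norm (w - wt))\<^sup>2 + (1/2) * (\<Sum>i\<in>{1..K - 1}. (\<theta> i - \<theta>t i)\<^sup>2)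
     + C * (\<Sum>i\<in>PA_I_idx K yl yr. \<xi> i)"

definition PA_I_minimizer ::
  "real \<Rightarrow> nat \<Rightarrow> real^'d \<Rightarrow> nat \<Rightarrow> nat \<Rightarrow> real^'d \<Rightarrow> (nat \<Rightarrow> real)
   \<Rightarrow> real^'d \<Rightarrow> (nat \<Rightarrow> real) \<Rightarrow> (nat \<Rightarrow> real) \<Rightarrow> bool" where
  "PA_I_minimizer C K x yl yr wt \<theta>t w \<theta> \<xi> \<longleftrightarrow>
     PA_feasible K x yl yr w \<theta> \<xi> \<and>
     (\<forall>w' \<theta>' \<xi>'. PA_feasible K x yl yr w' \<theta>' \<xi>' \<longrightarrow>
        PA_objective C K yl yr wt \<theta>t w \<theta> \<xi> \<le> PA_objective C K yl yr wt \<theta>t w' \<theta>' \<xi>')"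

end

theory Submission
  imports Defs
begin

lemma sum_two_change:
  fixes f g :: "nat \<Rightarrow> real"
  assumes "finite S" "i \<in> S" "j \<in> S" "i \<noteq> j" "\<And>k. k \<in> S \<Longrightarrow> k \<noteq> i \<Longrightarrow> k \<noteq> j \<Longrightarrow> g k = f k"
  shows "sum g S - sum f S = g i + g j - f i - f j"
proof -
  have S: "S = insert i (insert j (S - {i, j}))" using assms by auto
  have "sum g (S - {i,j}) = sum f (S - {i,j})" using assms(5) by (intro sum.cong) auto
  moreover have "sum g S = g i + g j + sum g (S - {i,j})"
    by (subst S, simp add: assms)
  moreover have "sum f S = f i + f j + sum f (S - {i,j})"
    by (subst S, simp add: assms)
  ultimately show ?thesis by simp
qed

theorem theorem2:
  fixes C :: real and K yl yr :: nat
    and wt x w :: "real^'d" and \<theta>t \<theta> \<xi> :: "nat \<Rightarrow> real"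
  assumes "C > 0"
    and "\<And>i. 1 \<le> i \<Longrightarrow> i < K - 1 \<Longrightarrow> \<theta>t i \<le> \<theta>t (i + 1)"
    and "1 \<le> yl" and "yl \<le> yr" and "yr \<le> K"
    and "PA_I_minimizer C K x yl yr wt \<theta>t w \<theta> \<xi>"
  shows "\<forall>i. 1 \<le> i \<and> i < K - 1 \<longrightarrow> \<theta> i \<le> \<theta> (i + 1)"
proof (rule ccontr)
  assume "\<not> ?thesis"
  then obtain i where i1: "1 \<le> i" and iK: "i < K - 1" and gt: "\<theta> i > \<theta> (i+1)" by auto
  have feas: "PA_feasible K x yl yr w \<theta> \<xi>"
    and minim: "\<And>w' \<theta>' \<xi>'. PA_feasible K x yl yr w' \<theta>' \<xi>' \<Longrightarrow>
        PA_objective C K yl yr wt \<theta>t w \<theta> \<xi> \<le> PA_objective C K yl yr wt \<theta>t w' \<theta>' \<xi>'"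
    using assms(6) unfolding PA_I_minimizer_def by auto
  have lo: "\<And>j. j \<in> {1..yl - 1} \<Longrightarrow> w \<bullet> x - \<theta> j \<ge> 1 - \<xi> j"
    and up: "\<And>j. j \<in> {yr..K - 1} \<Longrightarrow> w \<bullet> x - \<theta> j \<le> -1 + \<xi> j"
    and nn: "\<And>j. j \<in> PA_I_idx K yl yr \<Longrightarrow> \<xi> j \<ge> 0"
    using feas unfolding PA_feasible_def by auto
  define a where "a = \<theta> i"
  define b where "b = \<theta> (i+1)"
  define c where "c = (a + b) / 2"
  define same where "same = (i + 1 \<le> yl - 1 \<or> yr \<le> i)"
  define m where "m = (\<xi> i + \<xi> (i+1)) / 2"
  define \<theta>' where "\<theta>' = \<theta>(i := c, i+1 := c)"
  define \<xi>' where "\<xi>' = (if same then \<xi>(i := m, i+1 := m) else \<xi>)"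
  have ca: "c < a" and cb: "b < c" using gt unfolding a_def b_def c_def by auto
  have feas': "PA_feasible K x yl yr w \<theta>' \<xi>'"
    unfolding PA_feasible_def
  proof (intro conjI ballI)
    fix j assume j: "j \<in> {1..yl - 1}"
    show "w \<bullet> x - \<theta>' j \<ge> 1 - \<xi>' j"
    proof (cases "j = i \<or> j = i + 1")
      case True
      show ?thesis
      proof (cases same)
        case True
        then have "i + 1 \<le> yl - 1" using same_def j \<open>j = i \<or> j = i + 1\<close> assms(4) by auto
        then have "w \<bullet> x - a \<ge> 1 - \<xi> i" "w \<bullet> x - b \<ge> 1 - \<xi> (i+1)"
          using lo[of i] lo[of "i+1"] i1 unfolding a_def b_def by auto
        then show ?thesis using True \<open>j = i \<or> j = i + 1\<close>
          unfolding \<theta>'_def \<xi>'_def c_def m_def by (auto simp: field_simps)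
      next
        case False
        then have "j = i" using same_def j \<open>j = i \<or> j = i + 1\<close> by auto
        then show ?thesis using False lo[of i] j ca unfolding \<theta>'_def \<xi>'_def a_def by auto
      qed
    next
      case False
      then show ?thesis using lo[OF j] unfolding \<theta>'_def \<xi>'_def by auto
    qed
  next
    fix j assume j: "j \<in> {yr..K - 1}"
    show "w \<bullet> x - \<theta>' j \<le> -1 + \<xi>' j"
    proof (cases "j = i \<or> j = i + 1")
      case True
      show ?thesis
      proof (cases same)
        case True
        then have "yr \<le> i" using same_def j \<open>j = i \<or> j = i + 1\<close> assms(4) by auto
        then have "w \<bullet> x - a \<le> -1 + \<xi> i" "w \<bullet> x - b \<le> -1 + \<xi> (i+1)"
          using up[of i] up[of "i+1"] iK unfolding a_def b_def by auto
        then show ?thesis using True \<open>j = i \<or> j = i + 1\<close>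
          unfolding \<theta>'_def \<xi>'_def c_def m_def by (auto simp: field_simps)
      next
        case False
        then have "j = i + 1" using same_def j \<open>j = i \<or> j = i + 1\<close> by auto
        then show ?thesis using False up[of "i+1"] j cb unfolding \<theta>'_def \<xi>'_def b_def by auto
      qed
    next
      case False
      then show ?thesis using up[OF j] unfolding \<theta>'_def \<xi>'_def by auto
    qed
  next
    fix j assume j: "j \<in> PA_I_idx K yl yr"
    show "\<xi>' j \<ge> 0"
    proof (cases "same \<and> (j = i \<or> j = i + 1)")
      case True
      then have "i \<in> PA_I_idx K yl yr" "i + 1 \<in> PA_I_idx K yl yr"
        using same_def i1 iK unfolding PA_I_idx_def by auto
      then show ?thesis using True nn unfolding \<xi>'_def m_def by auto
    next
      case False
      then show ?thesis using nn[OF j] unfolding \<xi>'_def by auto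
    qed
  qed
  have iS: "i \<in> {1..K-1}" "i+1 \<in> {1..K-1}" using i1 iK by auto
  have th: "(\<Sum>j\<in>{1..K - 1}. (\<theta>' j - \<theta>t j)\<^sup>2) - (\<Sum>j\<in>{1..K - 1}. (\<theta> j - \<theta>t j)\<^sup>2)
      = (c - \<theta>t i)\<^sup>2 + (c - \<theta>t (i+1))\<^sup>2 - (a - \<theta>t i)\<^sup>2 - (b - \<theta>t (i+1))\<^sup>2"
    by (subst sum_two_change[OF _ iS]) (auto simp: \<theta>'_def a_def b_def)
  have pq: "\<theta>t i \<le> \<theta>t (i+1)" using assms(2) i1 iK by auto
  have key: "(c - \<theta>t i)\<^sup>2 + (c - \<theta>t (i+1))\<^sup>2 - (a - \<theta>t i)\<^sup>2 - (b - \<theta>t (i+1))\<^sup>2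
      = - (a - b)\<^sup>2 / 2 - (a - b) * (\<theta>t (i+1) - \<theta>t i)"
    unfolding c_def by (simp add: power2_eq_square field_simps)
  have "(a - b) * (\<theta>t (i+1) - \<theta>t i) \<ge> 0" using pq ca cb by auto
  moreover have "(a - b)\<^sup>2 > 0" using ca cb by auto
  ultimately have thlt: "(\<Sum>j\<in>{1..K - 1}. (\<theta>' j - \<theta>t j)\<^sup>2) < (\<Sum>j\<in>{1..K - 1}. (\<theta> j - \<theta>t j)\<^sup>2)"
    using th key by linarith
  have xs: "(\<Sum>j\<in>PA_I_idx K yl yr. \<xi>' j) = (\<Sum>j\<in>PA_I_idx K yl yr. \<xi> j)"
  proof (cases same)
    case True
    then have iI: "i \<in> PA_I_idx K yl yr" "i + 1 \<in> PA_I_idx K yl yr"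
      using True same_def i1 iK unfolding PA_I_idx_def by auto
    have "(\<Sum>j\<in>PA_I_idx K yl yr. \<xi>' j) - (\<Sum>j\<in>PA_I_idx K yl yr. \<xi> j) = \<xi>' i + \<xi>' (i+1) - \<xi> i - \<xi> (i+1)"
      by (rule sum_two_change[OF _ iI]) (auto simp: PA_I_idx_def \<xi>'_def)
    then show ?thesis using True unfolding \<xi>'_def m_def by auto
  next
    case False
    then show ?thesis unfolding \<xi>'_def by simp
  qed
  have "PA_objective C K yl yr wt \<theta>t w \<theta>' \<xi>' < PA_objective C K yl yr wt \<theta>t w \<theta> \<xi>"
    unfolding PA_objective_def using thlt xs by simp
  with minim[OF feas'] show False by simp
qed

end
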